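(* Let $X$ be a real Banach space and $J,Y$ closed subspaces with $J\subseteq Y\subseteq X$, where $J$ is an $M$-ideal in $X$. If $Y/J$ has property-$(HB)$ in $X/J$, then $Y$ has property-$(HB)$ in $X$.
   Context: For a closed subspace $V$ of a Banach space $E$, $V^\perp=\{e^*\in E^*:e^*|_V=0\}$. $J$ is an $M$-ideal in $X$ if there is a closed subspace $W$ of $X^*$ with $X^*=J^\perp\oplus W$ and $\|u+w\|=\|u\|+\|w\|$ for $u\in J^\perp,w\in W$. $V$ has property-$(HB)$ in $E$ if there is a linear projection $P$ on $E^*$ with range $V^\perp$ and $\|P\|=1$ such that, writing $G=(I-P)(E^* )$, for every $e^*=v^\#+v^\perp$ with $v^\#\in G$, $0\neq v^\perp\in V^\perp$, one has $\|e^*\|>\|v^\#\|$ and $\|e^*\|\ge\|v^\perp\|$. $Y/J$ is regarded as a subspace of $X/J$ with the quotient norm. *)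

theory Defs
  imports "HOL-Analysis.Analysis"
begin

text \<open>A normed space is presented abstractly by a carrier S, an addition, a real
scalar multiplication and a norm N.  Its dual is the set of bounded linear
functionals on S (extended by 0 outside S, so that equality is extensional).\<close>

definition lin_on :: "'v set \<Rightarrow> ('v \<Rightarrow> 'v \<Rightarrow> 'v) \<Rightarrow> (real \<Rightarrow> 'v \<Rightarrow> 'v) \<Rightarrow> ('v \<Rightarrow> real) \<Rightarrow> bool" where
  "lin_on S add sc f \<longleftrightarrow>
     (\<forall>x\<in>S. \<forall>y\<in>S. f (add x y) = f x + f y) \<and> (\<forall>x\<in>S. \<forall>c. f (sc c x) = c * f x)"

definition dual_sp :: "'v set \<Rightarrow> ('v \<Rightarrow> 'v \<Rightarrow> 'v) \<Rightarrow> (real \<Rightarrow> 'v \<Rightarrow> 'v) \<Rightarrow> ('v \<Rightarrow> real) \<Rightarrow> ('v \<Rightarrow> real) set" where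
  "dual_sp S add sc N = {f. lin_on S add sc f \<and> (\<exists>C. \<forall>x\<in>S. \<bar>f x\<bar> \<le> C * N x) \<and> (\<forall>x. x \<notin> S \<longrightarrow> f x = 0)}"

text \<open>Dual norm: sup of |f x| over the closed unit ball.\<close>
definition dnorm :: "'v set \<Rightarrow> ('v \<Rightarrow> real) \<Rightarrow> ('v \<Rightarrow> real) \<Rightarrow> real" where
  "dnorm S N f = Sup {\<bar>f x\<bar> | x. x \<in> S \<and> N x \<le> 1}"

text \<open>Annihilator V^perp.\<close>
definition annih :: "'v set \<Rightarrow> ('v \<Rightarrow> 'v \<Rightarrow> 'v) \<Rightarrow> (real \<Rightarrow> 'v \<Rightarrow> 'v) \<Rightarrow> ('v \<Rightarrow> real) \<Rightarrow> 'v set \<Rightarrow> ('v \<Rightarrow> real) set" where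
  "annih S add sc N V = {f \<in> dual_sp S add sc N. \<forall>v\<in>V. f v = 0}"

definition fadd :: "('v \<Rightarrow> real) \<Rightarrow> ('v \<Rightarrow> real) \<Rightarrow> 'v \<Rightarrow> real" where
  "fadd f g = (\<lambda>x. f x + g x)"

definition fscale :: "real \<Rightarrow> ('v \<Rightarrow> real) \<Rightarrow> 'v \<Rightarrow> real" where
  "fscale c f = (\<lambda>x. c * f x)"

definition fminus :: "('v \<Rightarrow> real) \<Rightarrow> ('v \<Rightarrow> real) \<Rightarrow> 'v \<Rightarrow> real" where
  "fminus f g = (\<lambda>x. f x - g x)"

text \<open>Property-(HB) of V in the normed space E = (S, add, sc, N).\<close>
definition has_HB :: "'v set \<Rightarrow> ('v \<Rightarrow> 'v \<Rightarrow> 'v) \<Rightarrow> (real \<Rightarrow> 'v \<Rightarrow> 'v) \<Rightarrow> ('v \<Rightarrow> real) \<Rightarrow> 'v set \<Rightarrow> bool" where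
  "has_HB S add sc N V \<longleftrightarrow>
    (\<exists>P. (\<forall>f\<in>dual_sp S add sc N. P f \<in> dual_sp S add sc N)
       \<and> (\<forall>f\<in>dual_sp S add sc N. \<forall>g\<in>dual_sp S add sc N. P (fadd f g) = fadd (P f) (P g))
       \<and> (\<forall>f\<in>dual_sp S add sc N. \<forall>c. P (fscale c f) = fscale c (P f))
       \<and> (\<forall>f\<in>dual_sp S add sc N. P (P f) = P f)
       \<and> P ` dual_sp S add sc N = annih S add sc N V
       \<and> bdd_above {dnorm S N (P f) | f. f \<in> dual_sp S add sc N \<and> dnorm S N f \<le> 1}
       \<and> Sup {dnorm S N (P f) | f. f \<in> dual_sp S add sc N \<and> dnorm S N f \<le> 1} = 1
       \<and> (\<forall>g \<in> (\<lambda>f. fminus f (P f)) ` dual_sp S add sc N. \<forall>u \<in> annih S add sc N V.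
            u \<noteq> (\<lambda>x. 0) \<longrightarrow>
              dnorm S N (fadd g u) > dnorm S N g \<and> dnorm S N (fadd g u) \<ge> dnorm S N u))"

text \<open>Concrete instances: X itself, and the quotient X/J realized as cosets.\<close>
abbreviation Xdual :: "('a::real_normed_vector \<Rightarrow> real) set" where
  "Xdual \<equiv> dual_sp UNIV (+) (*\<^sub>R) norm"

abbreviation Xdnorm :: "('a::real_normed_vector \<Rightarrow> real) \<Rightarrow> real" where
  "Xdnorm \<equiv> dnorm UNIV norm"

definition M_ideal :: "'a::real_normed_vector set \<Rightarrow> bool" where
  "M_ideal J \<longleftrightarrow>
    (\<exists>W. W \<subseteq> Xdual
       \<and> (\<lambda>x. 0) \<in> W \<and> (\<forall>f\<in>W. \<forall>g\<in>W. fadd f g \<in> W) \<and> (\<forall>f\<in>W. \<forall>c. fscale c f \<in> W)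
       \<and> (\<forall>f\<in>Xdual. (\<forall>e>0. \<exists>w\<in>W. Xdnorm (fminus f w) < e) \<longrightarrow> f \<in> W)
       \<and> (\<forall>f\<in>Xdual. \<exists>u\<in>annih UNIV (+) (*\<^sub>R) norm J. \<exists>w\<in>W. f = fadd u w)
       \<and> annih UNIV (+) (*\<^sub>R) norm J \<inter> W = {\<lambda>x. 0}
       \<and> (\<forall>u\<in>annih UNIV (+) (*\<^sub>R) norm J. \<forall>w\<in>W. Xdnorm (fadd u w) = Xdnorm u + Xdnorm w))"

definition coset :: "'a::real_vector set \<Rightarrow> 'a \<Rightarrow> 'a set" where
  "coset J x = (\<lambda>j. x + j) ` J"

definition quot_carrier :: "'a::real_vector set \<Rightarrow> 'a set set" where
  "quot_carrier J = range (coset J)"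

definition qadd :: "'a::real_vector set \<Rightarrow> 'a set \<Rightarrow> 'a set \<Rightarrow> 'a set" where
  "qadd J A B = {a + b + j | a b j. a \<in> A \<and> b \<in> B \<and> j \<in> J}"

definition qscale :: "'a::real_vector set \<Rightarrow> real \<Rightarrow> 'a set \<Rightarrow> 'a set" where
  "qscale J c A = {c *\<^sub>R a + j | a j. a \<in> A \<and> j \<in> J}"

text \<open>Quotient norm: inf of the norms of the representatives.\<close>
definition qnorm :: "'a::real_normed_vector set \<Rightarrow> real" where
  "qnorm A = Inf (norm ` A)"

end

theory Submission
  imports Defs
begin

lemma Xd_lin:
  assumes "u \<in> (Xdual :: ('a::real_normed_vector \<Rightarrow> real) set)"
  shows "u (x + y) = u x + u y" and "u (c *\<^sub>R x) = c * u x" and "u 0 = 0"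
    and "u (x - y) = u x - u y" and "u (- x) = - u x"
proof -
  have l: "lin_on UNIV (+) (*\<^sub>R) u" using assms by (simp add: dual_sp_def)
  have a: "\<And>x y. u (x + y) = u x + u y" using l by (simp add: lin_on_def)
  show "u (x + y) = u x + u y" by (rule a)
  show s: "\<And>c x. u (c *\<^sub>R x) = c * u x" using l by (simp add: lin_on_def)
  show z: "u 0 = 0" using s[of 0 0] by simp
  have n: "\<And>x. u (- x) = - u x" using s[of "-1"] by simp
  show "u (- x) = - u x" by (rule n)
  show "u (x - y) = u x - u y" using a[of x "-y"] n[of y] by simp
qed

lemma Xd_bdd:
  assumes "u \<in> (Xdual :: ('a::real_normed_vector \<Rightarrow> real) set)"
  shows "bdd_above {\<bar>u x\<bar> | x. x \<in> UNIV \<and> norm x \<le> 1}"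
proof -
  obtain C where C: "\<And>x. \<bar>u x\<bar> \<le> C * norm x" using assms by (auto simp: dual_sp_def)
  have "\<bar>u x\<bar> \<le> max C 0" if "norm x \<le> 1" for x
  proof -
    have "C * norm x \<le> max C 0 * norm x" by (simp add: mult_right_mono)
    also have "\<dots> \<le> max C 0" using that by (simp add: mult_left_le)
    finally show ?thesis using C[of x] by linarith
  qed
  then show ?thesis by (auto intro!: bdd_aboveI[where M="max C 0"])
qed

lemma Xd_upper:
  assumes "u \<in> (Xdual :: ('a::real_normed_vector \<Rightarrow> real) set)" "norm x \<le> 1"
  shows "\<bar>u x\<bar> \<le> Xdnorm u"
  unfolding dnorm_def using assms Xd_bdd[OF assms(1)] by (auto intro!: cSup_upper)

lemma Xd_nonneg:
  assumes "u \<in> (Xdual :: ('a::real_normed_vector \<Rightarrow> real) set)"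
  shows "0 \<le> Xdnorm u"
  using Xd_upper[OF assms, of 0] by simp

lemma Xd_le:
  assumes "u \<in> (Xdual :: ('a::real_normed_vector \<Rightarrow> real) set)"
  shows "\<bar>u x\<bar> \<le> Xdnorm u * norm x"
proof (cases "x = 0")
  case True then show ?thesis using Xd_lin(3)[OF assms] by simp
next
  case False
  then have n: "norm x > 0" by simp
  have "\<bar>u ((1 / norm x) *\<^sub>R x)\<bar> \<le> Xdnorm u" using Xd_upper[OF assms] n by simp
  then have "\<bar>u x\<bar> / norm x \<le> Xdnorm u" using Xd_lin(2)[OF assms, of "1/norm x" x] n
    by (simp add: abs_mult)
  then show ?thesis using n by (simp add: divide_le_eq mult.commute)
qed


lemma coset_mem: "subspace J \<Longrightarrow> x \<in> coset J x"
  unfolding coset_def using subspace_0 by force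

lemma coset_iff: "a \<in> coset J x \<longleftrightarrow> a - x \<in> J"
  unfolding coset_def by (auto simp: image_iff intro!: bexI[where x="a - x"])

lemma coset_eq: assumes "subspace J" "a \<in> coset J x" shows "coset J a = coset J x"
proof -
  have j: "a - x \<in> J" using assms(2) coset_iff by blast
  show ?thesis unfolding set_eq_iff
  proof
    fix z
    have "z - x = (z - a) + (a - x)" by simp
    moreover have "z - a = (z - x) - (a - x)" by simp
    ultimately show "z \<in> coset J a \<longleftrightarrow> z \<in> coset J x" unfolding coset_iff
      using j assms(1) by (metis subspace_add subspace_diff)
  qed
qed

lemma qadd_coset: assumes "subspace J"
  shows "qadd J (coset J x) (coset J y) = coset J (x + y)"
proof (rule set_eqI)
  fix z
  show "z \<in> qadd J (coset J x) (coset J y) \<longleftrightarrow> z \<in> coset J (x + y)"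
  proof
    assume "z \<in> qadd J (coset J x) (coset J y)"
    then obtain a b j where z: "z = a + b + j" "a \<in> coset J x" "b \<in> coset J y" "j \<in> J"
      unfolding qadd_def by blast
    have "z - (x + y) = (a - x) + (b - y) + j" using z by (simp add: algebra_simps)
    then show "z \<in> coset J (x + y)" unfolding coset_iff using z assms
      by (metis coset_iff subspace_add)
  next
    assume "z \<in> coset J (x + y)"
    then have "z - (x + y) \<in> J" by (simp add: coset_iff)
    moreover have "z = x + y + (z - (x + y))" by simp
    ultimately show "z \<in> qadd J (coset J x) (coset J y)" unfolding qadd_def
      using coset_mem[OF assms] by blast
  qed
qed

lemma qscale_coset: assumes "subspace J"
  shows "qscale J c (coset J x) = coset J (c *\<^sub>R x)"
proof (rule set_eqI)
  fix z
  show "z \<in> qscale J c (coset J x) \<longleftrightarrow> z \<in> coset J (c *\<^sub>R x)"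
  proof
    assume "z \<in> qscale J c (coset J x)"
    then obtain a j where z: "z = c *\<^sub>R a + j" "a \<in> coset J x" "j \<in> J"
      unfolding qscale_def by blast
    have "z - c *\<^sub>R x = c *\<^sub>R (a - x) + j" using z by (simp add: algebra_simps)
    then show "z \<in> coset J (c *\<^sub>R x)" unfolding coset_iff using z assms
      by (metis coset_iff subspace_add subspace_scale)
  next
    assume "z \<in> coset J (c *\<^sub>R x)"
    then have "z - c *\<^sub>R x \<in> J" by (simp add: coset_iff)
    moreover have "z = c *\<^sub>R x + (z - c *\<^sub>R x)" by simp
    ultimately show "z \<in> qscale J c (coset J x)" unfolding qscale_def
      using coset_mem[OF assms] by blast
  qed
qed

lemma coset_in: "coset J x \<in> quot_carrier J"
  unfolding quot_carrier_def by simp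

lemma quot_cases: "A \<in> quot_carrier J \<Longrightarrow> (\<And>x. A = coset J x \<Longrightarrow> P) \<Longrightarrow> P"
  unfolding quot_carrier_def by blast

lemma qnorm_lower: assumes "a \<in> A" shows "qnorm A \<le> norm (a::'a::real_normed_vector)"
  unfolding qnorm_def using assms by (auto intro!: cInf_lower bdd_belowI[where m=0])

lemma qnorm_nonneg: assumes "subspace J" shows "0 \<le> qnorm (coset J (x::'a::real_normed_vector))"
  unfolding qnorm_def using coset_mem[OF assms] by (auto intro!: cInf_greatest)

lemma qnorm_coset_le: assumes "subspace J" shows "qnorm (coset J x) \<le> norm (x::'a::real_normed_vector)"
  using qnorm_lower coset_mem[OF assms] by blast

definition Tq :: "'a::real_vector set \<Rightarrow> ('a \<Rightarrow> real) \<Rightarrow> 'a set \<Rightarrow> real" where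
  "Tq J u A = (if A \<in> quot_carrier J then u (SOME a. a \<in> A) else 0)"

definition Sq :: "'a::real_vector set \<Rightarrow> ('a set \<Rightarrow> real) \<Rightarrow> 'a \<Rightarrow> real" where
  "Sq J p x = p (coset J x)"

abbreviation Jp :: "'a::real_normed_vector set \<Rightarrow> ('a \<Rightarrow> real) set" where
  "Jp J \<equiv> annih UNIV (+) (*\<^sub>R) norm J"

abbreviation qdual :: "'a::real_normed_vector set \<Rightarrow> ('a set \<Rightarrow> real) set" where
  "qdual J \<equiv> dual_sp (quot_carrier J) (qadd J) (qscale J) qnorm"

lemma Jp_coset: assumes "subspace J" "u \<in> Jp J" "a \<in> coset J x" shows "u a = u x"
proof -
  have "a - x \<in> J" using assms(3) coset_iff by blast
  then have "u (a - x) = 0" using assms(2) by (simp add: annih_def)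
  moreover have "u (a - x) = u a - u x" using assms(2) Xd_lin(4) by (auto simp: annih_def)
  ultimately show ?thesis by simp
qed

lemma Tq_coset: assumes "subspace J" "u \<in> Jp J" shows "Tq J u (coset J x) = u x"
proof -
  have "(SOME a. a \<in> coset J x) \<in> coset J x" using coset_mem[OF assms(1)] by (rule someI)
  then show ?thesis unfolding Tq_def using coset_in[of J x] Jp_coset[OF assms] by simp
qed

lemma Tq_bound: assumes "subspace J" "u \<in> Jp J"
  shows "\<bar>Tq J u (coset J x)\<bar> \<le> Xdnorm u * qnorm (coset J x)"
proof -
  have ud: "u \<in> Xdual" using assms(2) by (simp add: annih_def)
  have D: "0 \<le> Xdnorm u" by (rule Xd_nonneg[OF ud])
  have ub: "\<bar>u x\<bar> \<le> Xdnorm u * norm a" if "a \<in> coset J x" for a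
    using Jp_coset[OF assms that] Xd_le[OF ud, of a] by simp
  show ?thesis
  proof (cases "Xdnorm u = 0")
    case True then show ?thesis using ub[OF coset_mem[OF assms(1)]] Tq_coset[OF assms] by simp
  next
    case False
    then have Dp: "Xdnorm u > 0" using D by simp
    have "\<bar>u x\<bar> / Xdnorm u \<le> qnorm (coset J x)" unfolding qnorm_def
    proof (rule cInf_greatest)
      show "norm ` coset J x \<noteq> {}" using coset_mem[OF assms(1)] by blast
      fix r assume "r \<in> norm ` coset J x"
      then obtain a where "a \<in> coset J x" "r = norm a" by blast
      then show "\<bar>u x\<bar> / Xdnorm u \<le> r" using ub Dp by (simp add: divide_le_eq mult.commute)
    qed
    then show ?thesis using Dp Tq_coset[OF assms] by (simp add: divide_le_eq mult.commute)
  qed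
qed

lemma Tq_dual: assumes "subspace J" "u \<in> Jp J" shows "Tq J u \<in> qdual J"
proof -
  have ud: "u \<in> Xdual" using assms(2) by (simp add: annih_def)
  have lin: "lin_on (quot_carrier J) (qadd J) (qscale J) (Tq J u)"
    unfolding lin_on_def
  proof safe
    fix A B assume "A \<in> quot_carrier J" "B \<in> quot_carrier J"
    then obtain x y where "A = coset J x" "B = coset J y" by (metis quot_cases)
    then show "Tq J u (qadd J A B) = Tq J u A + Tq J u B"
      using qadd_coset[OF assms(1)] Tq_coset[OF assms] Xd_lin(1)[OF ud] by simp
  next
    fix A c assume "A \<in> quot_carrier J"
    then obtain x where "A = coset J x" by (metis quot_cases)
    then show "Tq J u (qscale J c A) = c * Tq J u A"
      using qscale_coset[OF assms(1)] Tq_coset[OF assms] Xd_lin(2)[OF ud] by simp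
  qed
  have "\<forall>A\<in>quot_carrier J. \<bar>Tq J u A\<bar> \<le> Xdnorm u * qnorm A"
    using Tq_bound[OF assms] by (metis quot_cases)
  then show ?thesis using lin unfolding dual_sp_def by (auto simp: Tq_def)
qed

lemma Tq_dnorm: assumes "subspace J" "u \<in> Jp J"
  shows "dnorm (quot_carrier J) qnorm (Tq J u) = Xdnorm u"
proof -
  have ud: "u \<in> Xdual" using assms(2) by (simp add: annih_def)
  have D: "0 \<le> Xdnorm u" by (rule Xd_nonneg[OF ud])
  let ?Q = "{\<bar>Tq J u A\<bar> | A. A \<in> quot_carrier J \<and> qnorm A \<le> 1}"
  have qb: "r \<le> Xdnorm u" if "r \<in> ?Q" for r
  proof -
    obtain A where A: "r = \<bar>Tq J u A\<bar>" "A \<in> quot_carrier J" "qnorm A \<le> 1" using \<open>r \<in> ?Q\<close> by blast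
    then obtain x where x: "A = coset J x" by (metis quot_cases)
    have "\<bar>Tq J u A\<bar> \<le> Xdnorm u * qnorm A" using Tq_bound[OF assms] x by simp
    also have "\<dots> \<le> Xdnorm u" using A(3) D by (simp add: mult_left_le)
    finally show ?thesis using A by simp
  qed
  have ne: "?Q \<noteq> {}"
  proof -
    have "qnorm (coset J 0) \<le> 1" using qnorm_coset_le[OF assms(1), of 0] by simp
    then show ?thesis using coset_in by blast
  qed
  have le1: "Sup ?Q \<le> Xdnorm u" using ne qb by (intro cSup_least) auto
  have le2: "Xdnorm u \<le> Sup ?Q" unfolding dnorm_def
  proof (rule cSup_least)
    show "{\<bar>u x\<bar> |x. x \<in> UNIV \<and> norm x \<le> 1} \<noteq> {}" by (auto intro!: exI[where x=0])
    fix r assume "r \<in> {\<bar>u x\<bar> |x. x \<in> UNIV \<and> norm x \<le> 1}"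
    then obtain x where x: "r = \<bar>u x\<bar>" "norm x \<le> 1" by blast
    have "r \<in> ?Q" using x Tq_coset[OF assms, of x] coset_in qnorm_coset_le[OF assms(1), of x]
      by (auto intro!: exI[where x="coset J x"])
    then show "r \<le> Sup ?Q" using qb by (intro cSup_upper) (auto intro!: bdd_aboveI)
  qed
  show ?thesis unfolding dnorm_def using le1 le2 unfolding dnorm_def by simp
qed

lemma Sq_Jp: assumes "subspace J" "p \<in> qdual J" shows "Sq J p \<in> Jp J"
proof -
  have l: "lin_on (quot_carrier J) (qadd J) (qscale J) p" using assms(2) by (simp add: dual_sp_def)
  have add: "p (qadd J A B) = p A + p B" if "A \<in> quot_carrier J" "B \<in> quot_carrier J" for A B
    using l that unfolding lin_on_def by blast
  have sc: "p (qscale J c A) = c * p A" if "A \<in> quot_carrier J" for A c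
    using l that unfolding lin_on_def by blast
  obtain C where C: "\<forall>A\<in>quot_carrier J. \<bar>p A\<bar> \<le> C * qnorm A" using assms(2) by (auto simp: dual_sp_def)
  have lin: "lin_on UNIV (+) (*\<^sub>R) (Sq J p)" unfolding lin_on_def Sq_def
    using add[OF coset_in coset_in] sc[OF coset_in] qadd_coset[OF assms(1)] qscale_coset[OF assms(1)]
    by metis
  have bd: "\<bar>Sq J p x\<bar> \<le> max C 0 * norm x" for x
  proof -
    have "\<bar>Sq J p x\<bar> \<le> C * qnorm (coset J x)" using C coset_in[of J x] by (simp add: Sq_def)
    also have "\<dots> \<le> max C 0 * qnorm (coset J x)" using qnorm_nonneg[OF assms(1)] by (simp add: mult_right_mono)
    also have "\<dots> \<le> max C 0 * norm x" using qnorm_coset_le[OF assms(1)] by (simp add: mult_left_mono)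
    finally show ?thesis .
  qed
  have z: "Sq J p j = 0" if "j \<in> J" for j
  proof -
    have "coset J j = coset J 0" using coset_eq[OF assms(1)] that by (simp add: coset_iff)
    also have "\<dots> = qscale J 0 (coset J 0)" using qscale_coset[OF assms(1)] by simp
    finally show ?thesis using sc[OF coset_in[of J 0], of 0] by (simp add: Sq_def)
  qed
  show ?thesis unfolding annih_def dual_sp_def using lin bd z by blast
qed

lemma STq: assumes "subspace J" "u \<in> Jp J" shows "Sq J (Tq J u) = u"
  using Tq_coset[OF assms] by (simp add: Sq_def fun_eq_iff)

lemma TSq: assumes "subspace J" "p \<in> qdual J" shows "Tq J (Sq J p) = p"
proof
  fix A
  show "Tq J (Sq J p) A = p A"
  proof (cases "A \<in> quot_carrier J")
    case True
    then obtain x where "A = coset J x" by (metis quot_cases)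
    then show ?thesis using Tq_coset[OF assms(1) Sq_Jp[OF assms]] by (simp add: Sq_def)
  next
    case False then show ?thesis using assms(2) by (simp add: Tq_def dual_sp_def)
  qed
qed

lemma Tq_ops: "Tq J (fadd u v) = fadd (Tq J u) (Tq J v)" "Tq J (fminus u v) = fminus (Tq J u) (Tq J v)"
   "Tq J (fscale c u) = fscale c (Tq J u)"
  by (auto simp: Tq_def fadd_def fminus_def fscale_def fun_eq_iff)

lemma Sq_ops: "Sq J (fadd u v) = fadd (Sq J u) (Sq J v)" "Sq J (fminus u v) = fminus (Sq J u) (Sq J v)"
   "Sq J (fscale c u) = fscale c (Sq J u)"
  by (auto simp: Sq_def fadd_def fminus_def fscale_def fun_eq_iff)

lemma Sq_dnorm: assumes "subspace J" "p \<in> qdual J"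
  shows "Xdnorm (Sq J p) = dnorm (quot_carrier J) qnorm p"
  using Tq_dnorm[OF assms(1) Sq_Jp[OF assms]] TSq[OF assms] by simp

lemma annih_ops:
  assumes "u \<in> annih UNIV (+) (*\<^sub>R) norm V" "v \<in> annih UNIV (+) (*\<^sub>R) norm (V::'a::real_normed_vector set)"
  shows "fadd u v \<in> annih UNIV (+) (*\<^sub>R) norm V" "fminus u v \<in> annih UNIV (+) (*\<^sub>R) norm V"
    "fscale c u \<in> annih UNIV (+) (*\<^sub>R) norm V"
proof -
  have ud: "u \<in> Xdual" and vd: "v \<in> Xdual" using assms by (auto simp: annih_def)
  obtain C where C: "\<And>x. \<bar>u x\<bar> \<le> C * norm x" using ud by (auto simp: dual_sp_def)
  obtain D where D: "\<And>x. \<bar>v x\<bar> \<le> D * norm x" using vd by (auto simp: dual_sp_def)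
  have b1: "\<exists>E. \<forall>x. \<bar>u x + v x\<bar> \<le> E * norm x"
    using C D by (intro exI[where x="C+D"]) (smt (verit, best) distrib_right)
  have b2: "\<exists>E. \<forall>x. \<bar>u x - v x\<bar> \<le> E * norm x"
    using C D by (intro exI[where x="C+D"]) (smt (verit, best) distrib_right)
  have b3: "\<exists>E. \<forall>x. \<bar>c * u x\<bar> \<le> E * norm x"
    using C by (intro exI[where x="\<bar>c\<bar>*C"]) (simp add: abs_mult mult.assoc mult_left_mono)
  from b1 b2 b3 show "fadd u v \<in> annih UNIV (+) (*\<^sub>R) norm V" "fminus u v \<in> annih UNIV (+) (*\<^sub>R) norm V"
    "fscale c u \<in> annih UNIV (+) (*\<^sub>R) norm V" using assms Xd_lin[OF ud] Xd_lin[OF vd]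
    by (auto simp: annih_def dual_sp_def lin_on_def fadd_def fminus_def fscale_def algebra_simps)
qed

theorem theorem3p11:
  fixes J Y :: "'a::banach set"
  assumes "closed J" and "subspace J" and "closed Y" and "subspace Y"
    and "J \<subseteq> Y"
    and "M_ideal J"
    and "has_HB (quot_carrier J) (qadd J) (qscale J) qnorm (coset J ` Y)"
  shows "has_HB UNIV (+) (*\<^sub>R) norm Y"
proof -
  note sJ = assms(2)
  obtain W where W: "W \<subseteq> Xdual" "(\<lambda>x. 0) \<in> W" "\<forall>f\<in>W. \<forall>g\<in>W. fadd f g \<in> W" "\<forall>f\<in>W. \<forall>c. fscale c f \<in> W"
       "\<forall>f\<in>Xdual. \<exists>u\<in>Jp J. \<exists>w\<in>W. f = fadd u w"
       "Jp J \<inter> W = {\<lambda>x. 0}"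
       "\<forall>u\<in>Jp J. \<forall>w\<in>W. Xdnorm (fadd u w) = Xdnorm u + Xdnorm w"
    using assms(6) unfolding M_ideal_def by (elim exE conjE) (rule that; assumption)
  let ?AY = "annih (quot_carrier J) (qadd J) (qscale J) qnorm (coset J ` Y)"
  let ?YP = "annih UNIV (+) (*\<^sub>R) norm Y"
  obtain Q where Q: "\<forall>f\<in>qdual J. Q f \<in> qdual J"
       "\<forall>f\<in>qdual J. \<forall>g\<in>qdual J. Q (fadd f g) = fadd (Q f) (Q g)"
       "\<forall>f\<in>qdual J. \<forall>c. Q (fscale c f) = fscale c (Q f)"
       "\<forall>f\<in>qdual J. Q (Q f) = Q f"
       "Q ` qdual J = ?AY"
       "bdd_above {dnorm (quot_carrier J) qnorm (Q f) | f. f \<in> qdual J \<and> dnorm (quot_carrier J) qnorm f \<le> 1}"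
       "Sup {dnorm (quot_carrier J) qnorm (Q f) | f. f \<in> qdual J \<and> dnorm (quot_carrier J) qnorm f \<le> 1} = 1"
       "\<forall>g \<in> (\<lambda>f. fminus f (Q f)) ` qdual J. \<forall>u \<in> ?AY.
            u \<noteq> (\<lambda>x. 0) \<longrightarrow>
              dnorm (quot_carrier J) qnorm (fadd g u) > dnorm (quot_carrier J) qnorm g
            \<and> dnorm (quot_carrier J) qnorm (fadd g u) \<ge> dnorm (quot_carrier J) qnorm u"
    using assms(7) unfolding has_HB_def by (elim exE conjE) (rule that; assumption)
  have JpX: "u \<in> Xdual" if "u \<in> Jp J" for u using that by (simp add: annih_def)
  have YJ: "v \<in> Jp J" if "v \<in> ?YP" for v using that assms(5) by (auto simp: annih_def)
  have AYq: "p \<in> qdual J" if "p \<in> ?AY" for p using that by (simp add: annih_def)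
  have SAY: "Sq J p \<in> ?YP" if "p \<in> ?AY" for p
  proof -
    have "Sq J p \<in> Xdual" using Sq_Jp[OF sJ AYq[OF that]] JpX by blast
    moreover have "Sq J p y = 0" if "y \<in> Y" for y
      using \<open>p \<in> ?AY\<close> that by (auto simp: annih_def Sq_def)
    ultimately show ?thesis by (simp add: annih_def)
  qed
  have TYP: "Tq J v \<in> ?AY" if "v \<in> ?YP" for v
  proof -
    have "Tq J v \<in> qdual J" using Tq_dual[OF sJ YJ[OF that]] .
    moreover have "Tq J v A = 0" if A: "A \<in> coset J ` Y" for A
    proof -
      obtain y where "y \<in> Y" "A = coset J y" using A by blast
      then show ?thesis using Tq_coset[OF sJ YJ[OF \<open>v \<in> ?YP\<close>]] \<open>v \<in> ?YP\<close> by (simp add: annih_def)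
    qed
    ultimately show ?thesis by (simp add: annih_def)
  qed
  have uniq: "u1 = u2" if "u1 \<in> Jp J" "u2 \<in> Jp J" "w1 \<in> W" "w2 \<in> W" "fadd u1 w1 = fadd u2 w2"
    for u1 u2 w1 w2
  proof -
    have pw: "u1 x + w1 x = u2 x + w2 x" for x using fun_cong[OF that(5), of x] by (simp add: fadd_def)
    have e: "fminus u1 u2 = fadd w2 (fscale (-1) w1)"
      unfolding fminus_def fadd_def fscale_def
    proof
      fix x show "u1 x - u2 x = w2 x + - 1 * w1 x" using pw[of x] by linarith
    qed
    have "fminus u1 u2 \<in> Jp J" using annih_ops[OF that(1,2)] by blast
    moreover have "fadd w2 (fscale (-1) w1) \<in> W" using W(3,4) that(3,4) by blast
    ultimately have "fminus u1 u2 \<in> Jp J \<inter> W" using e by simp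
    then have "fminus u1 u2 = (\<lambda>x. 0)" unfolding W(6) by simp
    then show ?thesis by (auto simp: fun_eq_iff fminus_def)
  qed
  define comp where "comp f = (SOME u. u \<in> Jp J \<and> (\<exists>w\<in>W. f = fadd u w))" for f
  have comp1: "comp f \<in> Jp J \<and> (\<exists>w\<in>W. f = fadd (comp f) w)" if fX: "f \<in> Xdual" for f
  proof -
    obtain u where u: "u \<in> Jp J" "\<exists>w\<in>W. f = fadd u w" using W(5)[rule_format, OF fX] by (elim bexE) blast
    have "\<exists>u. u \<in> Jp J \<and> (\<exists>w\<in>W. f = fadd u w)" using u by (intro exI[where x=u] conjI)
    then show ?thesis unfolding comp_def by (rule someI_ex)
  qed
  have comp_u: "comp f = u" if "u \<in> Jp J" "w \<in> W" "f = fadd u w" for f u w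
  proof -
    have "\<exists>u. u \<in> Jp J \<and> (\<exists>w\<in>W. f = fadd u w)" using that by (intro exI[where x=u] conjI bexI[where x=w])
    then have "comp f \<in> Jp J \<and> (\<exists>w\<in>W. f = fadd (comp f) w)"
      unfolding comp_def by (rule someI_ex)
    then obtain w' where w': "comp f \<in> Jp J" "w' \<in> W" "f = fadd (comp f) w'" by blast
    show ?thesis using uniq[OF w'(1) that(1) w'(2) that(2)] w'(3) that(3) by simp
  qed
  have comp_id: "comp u = u" if "u \<in> Jp J" for u
    using comp_u[OF that W(2)] by (simp add: fadd_def)
  have comp_add: "comp (fadd f g) = fadd (comp f) (comp g)" if f: "f \<in> Xdual" and g: "g \<in> Xdual" for f g
  proof -
    obtain wf wg where "wf \<in> W" "f = fadd (comp f) wf" "wg \<in> W" "g = fadd (comp g) wg"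
      using comp1[OF f] comp1[OF g] by blast
    moreover have "fadd (comp f) (comp g) \<in> Jp J" using annih_ops(1) conjunct1[OF comp1[OF f]] conjunct1[OF comp1[OF g]] by blast
    moreover have "fadd wf wg \<in> W" using W(3) calculation by blast
    ultimately show ?thesis
      by (intro comp_u[where w="fadd wf wg"]) (auto simp: fadd_def fun_eq_iff)
  qed
  have comp_sc: "comp (fscale c f) = fscale c (comp f)" if f: "f \<in> Xdual" for f c
  proof -
    obtain wf where "wf \<in> W" "f = fadd (comp f) wf"
      using comp1[OF f] by blast
    moreover have "fscale c (comp f) \<in> Jp J" using annih_ops(3) conjunct1[OF comp1[OF f]] conjunct1[OF comp1[OF f]] by blast
    moreover have "fscale c wf \<in> W" using W(4) calculation by blast
    ultimately show ?thesis
      by (intro comp_u[where w="fscale c wf"]) (auto simp: fadd_def fscale_def fun_eq_iff algebra_simps)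
  qed
  have Tcq: "Tq J (comp f) \<in> qdual J" if "f \<in> Xdual" for f
    using Tq_dual[OF sJ] comp1[OF that] by blast
  define P where "P f = Sq J (Q (Tq J (comp f)))" for f
  have PY: "P f \<in> ?YP" if "f \<in> Xdual" for f
    unfolding P_def using SAY Q(5) Tcq[OF that] by blast
  have PX: "P f \<in> Xdual" if "f \<in> Xdual" for f using PY[OF that] by (simp add: annih_def)
  have PS: "P (Sq J p) = Sq J (Q p)" if "p \<in> qdual J" for p
    unfolding P_def using comp_id[OF Sq_Jp[OF sJ that]] TSq[OF sJ that] by simp
  show ?thesis unfolding has_HB_def
  proof (intro exI[where x=P] conjI)
    show "\<forall>f\<in>Xdual. P f \<in> Xdual" using PX by blast
    show "\<forall>f\<in>Xdual. \<forall>g\<in>Xdual. P (fadd f g) = fadd (P f) (P g)"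
    proof (intro ballI)
      fix f g :: "'a \<Rightarrow> real" assume f: "f \<in> Xdual" and g: "g \<in> Xdual"
      have "P (fadd f g) = Sq J (Q (fadd (Tq J (comp f)) (Tq J (comp g))))"
        unfolding P_def comp_add[OF f g] Tq_ops(1) ..
      also have "\<dots> = Sq J (fadd (Q (Tq J (comp f))) (Q (Tq J (comp g))))"
        using Q(2) Tcq[OF f] Tcq[OF g] by simp
      also have "\<dots> = fadd (P f) (P g)" unfolding P_def Sq_ops(1) ..
      finally show "P (fadd f g) = fadd (P f) (P g)" .
    qed
    show "\<forall>f\<in>Xdual. \<forall>c. P (fscale c f) = fscale c (P f)"
    proof (intro ballI allI)
      fix f :: "'a \<Rightarrow> real" and c :: real assume f: "f \<in> Xdual"
      have "P (fscale c f) = Sq J (Q (fscale c (Tq J (comp f))))"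
        unfolding P_def comp_sc[OF f] Tq_ops(3) ..
      also have "\<dots> = Sq J (fscale c (Q (Tq J (comp f))))"
        using Q(3) Tcq[OF f] by simp
      also have "\<dots> = fscale c (P f)" unfolding P_def Sq_ops(3) ..
      finally show "P (fscale c f) = fscale c (P f)" .
    qed
    show "\<forall>f\<in>Xdual. P (P f) = P f"
    proof
      fix f :: "'a \<Rightarrow> real" assume f: "f \<in> Xdual"
      have q: "Q (Tq J (comp f)) \<in> qdual J" using Q(1) Tcq[OF f] by blast
      show "P (P f) = P f" using PS[OF q] Q(4) Tcq[OF f] unfolding P_def by simp
    qed
    show "P ` Xdual = ?YP"
    proof
      show "P ` Xdual \<subseteq> ?YP" using PY by blast
      show "?YP \<subseteq> P ` Xdual"
      proof
        fix v :: "'a \<Rightarrow> real" assume v: "v \<in> ?YP"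
        obtain p where p: "p \<in> qdual J" "Tq J v = Q p" using TYP[OF v] Q(5) by (metis imageE)
        have "P (Sq J p) = v" using PS[OF p(1)] p(2) STq[OF sJ YJ[OF v]] by simp
        moreover have "Sq J p \<in> Xdual" using Sq_Jp[OF sJ p(1)] JpX by blast
        ultimately show "v \<in> P ` Xdual" by blast
      qed
    qed
    have seteq: "{Xdnorm (P f) | f. f \<in> Xdual \<and> Xdnorm f \<le> 1}
      = {dnorm (quot_carrier J) qnorm (Q f) | f. f \<in> qdual J \<and> dnorm (quot_carrier J) qnorm f \<le> 1}"
    proof (intro set_eqI iffI)
      fix r assume "r \<in> {Xdnorm (P f) | f. f \<in> Xdual \<and> Xdnorm f \<le> 1}"
      then obtain f where f: "r = Xdnorm (P f)" "f \<in> Xdual" "Xdnorm f \<le> 1" by blast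
      obtain w where w: "w \<in> W" "f = fadd (comp f) w" using comp1[OF f(2)] by blast
      have cJ: "comp f \<in> Jp J" using comp1[OF f(2)] by blast
      have "Xdnorm f = Xdnorm (comp f) + Xdnorm w" using W(7)[rule_format, OF cJ w(1)] w(2) by metis
      moreover have "0 \<le> Xdnorm w" using Xd_nonneg W(1) w by blast
      ultimately have "dnorm (quot_carrier J) qnorm (Tq J (comp f)) \<le> 1"
        using Tq_dnorm[OF sJ cJ] f(3) by simp
      moreover have "r = dnorm (quot_carrier J) qnorm (Q (Tq J (comp f)))"
        using f(1) Sq_dnorm[OF sJ] Q(1) Tcq[OF f(2)] unfolding P_def by simp
      ultimately show "r \<in> {dnorm (quot_carrier J) qnorm (Q f) | f. f \<in> qdual J \<and> dnorm (quot_carrier J) qnorm f \<le> 1}"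
        using Tcq[OF f(2)] by blast
    next
      fix r assume "r \<in> {dnorm (quot_carrier J) qnorm (Q f) | f. f \<in> qdual J \<and> dnorm (quot_carrier J) qnorm f \<le> 1}"
      then obtain p where p: "r = dnorm (quot_carrier J) qnorm (Q p)" "p \<in> qdual J"
        "dnorm (quot_carrier J) qnorm p \<le> 1" by blast
      have "Xdnorm (P (Sq J p)) = r" using PS[OF p(2)] Sq_dnorm[OF sJ] Q(1) p by simp
      moreover have "Xdnorm (Sq J p) \<le> 1" using Sq_dnorm[OF sJ p(2)] p(3) by simp
      moreover have "Sq J p \<in> Xdual" using Sq_Jp[OF sJ p(2)] JpX by blast
      ultimately show "r \<in> {Xdnorm (P f) | f. f \<in> Xdual \<and> Xdnorm f \<le> 1}" by blast
    qed
    show "bdd_above {Xdnorm (P f) | f. f \<in> Xdual \<and> Xdnorm f \<le> 1}" using seteq Q(6) by simp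
    show "Sup {Xdnorm (P f) | f. f \<in> Xdual \<and> Xdnorm f \<le> 1} = 1" using seteq Q(7) by simp
    show "\<forall>g\<in>(\<lambda>f. fminus f (P f)) ` Xdual. \<forall>u\<in>?YP. u \<noteq> (\<lambda>x. 0) \<longrightarrow>
            Xdnorm g < Xdnorm (fadd g u) \<and> Xdnorm u \<le> Xdnorm (fadd g u)"
    proof (intro ballI impI)
      fix g v :: "'a \<Rightarrow> real" assume g: "g \<in> (\<lambda>f. fminus f (P f)) ` Xdual" and v: "v \<in> ?YP" and v0: "v \<noteq> (\<lambda>x. 0)"
      obtain f where f: "f \<in> Xdual" "g = fminus f (P f)" using g by blast
      obtain w where w: "w \<in> W" "f = fadd (comp f) w" using comp1[OF f(1)] by blast
      have cJ: "comp f \<in> Jp J" using comp1[OF f(1)] by blast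
      define u where "u = comp f"
      define psi where "psi = Q (Tq J u)"
      have psiq: "psi \<in> qdual J" unfolding psi_def u_def using Q(1) Tcq[OF f(1)] by blast
      have psiY: "Sq J psi \<in> Jp J" using Sq_Jp[OF sJ psiq] .
      define h where "h = fminus u (Sq J psi)"
      have hJ: "h \<in> Jp J" unfolding h_def u_def using annih_ops cJ psiY by blast
      have Th: "Tq J h = fminus (Tq J u) psi" unfolding h_def Tq_ops(2) TSq[OF sJ psiq] ..
      have gh: "g = fadd h w" using f(2) w(2) unfolding h_def P_def psi_def u_def
        by (auto simp: fun_eq_iff fadd_def fminus_def)
      have gq: "fminus (Tq J u) psi \<in> (\<lambda>f. fminus f (Q f)) ` qdual J"
        unfolding psi_def u_def using Tcq[OF f(1)] by blast
      have TvAY: "Tq J v \<in> ?AY" using TYP[OF v] .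
      have Tv0: "Tq J v \<noteq> (\<lambda>x. 0)"
      proof
        assume "Tq J v = (\<lambda>x. 0)"
        then have "Sq J (Tq J v) = (\<lambda>x. 0)" by (simp add: Sq_def fun_eq_iff)
        then show False using STq[OF sJ YJ[OF v]] v0 by simp
      qed
      have ineq: "dnorm (quot_carrier J) qnorm (fadd (fminus (Tq J u) psi) (Tq J v)) > dnorm (quot_carrier J) qnorm (fminus (Tq J u) psi)
            \<and> dnorm (quot_carrier J) qnorm (fadd (fminus (Tq J u) psi) (Tq J v)) \<ge> dnorm (quot_carrier J) qnorm (Tq J v)"
        using Q(8) gq TvAY Tv0 by blast
      have hvJ: "fadd h v \<in> Jp J" using annih_ops hJ YJ[OF v] by blast
      have e1: "Xdnorm g = Xdnorm h + Xdnorm w" using W(7)[rule_format, OF hJ w(1)] gh by metis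
      have gv: "fadd g v = fadd (fadd h v) w" using gh by (auto simp: fun_eq_iff fadd_def)
      have e2: "Xdnorm (fadd g v) = Xdnorm (fadd h v) + Xdnorm w" using W(7)[rule_format, OF hvJ w(1)] gv by metis
      have e3: "Xdnorm (fadd h v) = dnorm (quot_carrier J) qnorm (fadd (fminus (Tq J u) psi) (Tq J v))"
        using Tq_dnorm[OF sJ hvJ] unfolding Tq_ops(1) Th by simp
      have e4: "Xdnorm h = dnorm (quot_carrier J) qnorm (fminus (Tq J u) psi)"
        using Tq_dnorm[OF sJ hJ] Th by simp
      have e5: "Xdnorm v = dnorm (quot_carrier J) qnorm (Tq J v)"
        using Tq_dnorm[OF sJ YJ[OF v]] by simp
      have wn: "0 \<le> Xdnorm w" using Xd_nonneg W(1) w by blast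
      show "Xdnorm g < Xdnorm (fadd g v) \<and> Xdnorm v \<le> Xdnorm (fadd g v)"
        using ineq e1 e2 e3 e4 e5 wn by linarith
    qed
  qed
qed

end
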